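(* Let $(s_{1,1},\ldots,s_{1,m})=\mathcal{N}(\sigma_1,\ldots,\sigma_m)$ be a Nikishin system and ${\bf n}=(n_0,\ldots,n_m)\in\mathbb{Z}_+^{m+1}$, $|{\bf n}|=n_0+\cdots+n_m$. Consider the linear form \[ \mathcal{L}_{\bf n}=p_0+\sum_{k=1}^m p_k\widehat{s}_{1,k},\qquad \deg p_k\le n_k-1,\ k=0,\ldots,m, \] where the polynomials $p_k$ have real coefficients. Assume that $n_0=\max\{n_0,n_1-1,\ldots,n_m-1\}$. If $\mathcal{L}_{\bf n}$ has at least $|{\bf n}|$ zeros in $\mathbb{C}\setminus\Delta_1$, then the reduced form $p_1+\sum_{k=2}^m p_k\widehat{s}_{2,k}$ has at least $|{\bf n}|-n_0$ zeros in $\mathbb{C}\setminus\Delta_2$.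
   Context: For a bounded interval $\Delta\subset\mathbb{R}$, $\mathcal{M}(\Delta)$ is the class of finite Borel measures of constant sign whose compact support consists of infinitely many points, is contained in $\mathbb{R}$, and has $\Delta$ as the smallest interval containing it. The Cauchy transform of a measure $s$ is $\widehat{s}(z)=\int\frac{ds(x)}{z-x}$. Nikishin system: let $\Delta_1,\ldots,\Delta_m$ be bounded real intervals with $\Delta_j\cap\Delta_{j+1}=\emptyset$ for $j=1,\ldots,m-1$, and $\sigma_j\in\mathcal{M}(\Delta_j)$ with $\mathrm{Co}(\operatorname{supp}\sigma_j)=\Delta_j$. For $1\le j\le k\le m$ define $s_{j,j}=\sigma_j$ and recursively $ds_{j,k}(x)=\widehat{s}_{j+1,k}(x)\,d\sigma_j(x)$ for $j<k$. Then $\mathcal{N}(\sigma_1,\ldots,\sigma_m)=(s_{1,1},\ldots,s_{1,m})$. When $m=1$, the reduced form is just $p_1$ and $\Delta_2$ is understood to be empty. *)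

theory Defs
  imports "HOL-Analysis.Analysis" "HOL-Computational_Algebra.Polynomial"
begin

definition msupp :: "real measure \<Rightarrow> real set" where
  "msupp M = {x. \<forall>e>0. emeasure M (ball x e) \<noteq> 0}"

text \<open>A measure of constant sign is represented as a sign c (1 or -1) times a finite
  positive Borel measure M.  The class M(Delta) for Delta = [a,b]:\<close>
definition in_class_M :: "real measure \<Rightarrow> real \<Rightarrow> real set \<Rightarrow> bool" where
  "in_class_M M c \<Delta> \<longleftrightarrow> sets M = sets borel \<and> finite_measure M \<and> (c = 1 \<or> c = -1) \<and>
     compact (msupp M) \<and> infinite (msupp M) \<and> convex hull (msupp M) = \<Delta>"

text \<open>Cauchy transforms of the measures s_{j,k} of the Nikishin system generated by
  sigma_j = c j * mu j:  nik mu c j k z is \<open>\<hat>s_{j,k}(z)\<close>, where s_{j,j} = sigma_j and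
  d s_{j,k}(x) = \<open>\<hat>s_{j+1,k}(x)\<close> d sigma_j(x) for j < k.\<close>
function nik :: "(nat \<Rightarrow> real measure) \<Rightarrow> (nat \<Rightarrow> real) \<Rightarrow> nat \<Rightarrow> nat \<Rightarrow> complex \<Rightarrow> complex" where
  "nik \<mu> c j k z =
     (if j < k then
        complex_of_real (c j) *
          (LINT x|\<mu> j. nik \<mu> c (Suc j) k (complex_of_real x) / (z - complex_of_real x))
      else complex_of_real (c j) * (LINT x|\<mu> j. 1 / (z - complex_of_real x)))"
  by auto
termination by (relation "Wellfounded.measure (\<lambda>(\<mu>,c,j,k,z). k - j)") auto

definition at_least_zeros :: "(complex \<Rightarrow> complex) \<Rightarrow> complex set \<Rightarrow> nat \<Rightarrow> bool" where
  "at_least_zeros f S N \<longleftrightarrow> (\<exists>Z mult. finite Z \<and> Z \<subseteq> S \<and> N \<le> (\<Sum>z\<in>Z. mult z) \<and>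
      (\<forall>z\<in>Z. \<forall>l<mult z. (deriv ^^ l) f z = 0))"

definition cpoly :: "real poly \<Rightarrow> complex \<Rightarrow> complex" where
  "cpoly p z = poly (map_poly complex_of_real p) z"

end

theory Submission
  imports Defs "HOL-Complex_Analysis.Complex_Analysis"
begin

definition good_meas :: "real measure \<Rightarrow> real set \<Rightarrow> bool" where
  "good_meas M K \<longleftrightarrow> finite_measure M \<and> sets M = sets borel \<and> compact K \<and> K \<noteq> {} \<and>
     emeasure M (UNIV - K) = 0"

lemma gm_space: "good_meas M K \<Longrightarrow> space M = UNIV"
  unfolding good_meas_def by (metis sets_eq_imp_space_eq space_borel)

lemma gm_AE: assumes "good_meas M K" shows "AE x in M. x \<in> K"
proof (rule AE_I')
  have "closed K" using assms compact_imp_closed unfolding good_meas_def by blast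
  hence "UNIV - K \<in> sets M" using assms unfolding good_meas_def
    by (simp add: Compl_eq_Diff_UNIV[symmetric] borel_open open_Compl)
  thus "UNIV - K \<in> null_sets M" using assms unfolding good_meas_def by (simp add: null_sets_def)
  show "{x \<in> space M. x \<notin> K} \<subseteq> UNIV - K" by auto
qed

lemma gm_meas: "good_meas M K \<Longrightarrow> h \<in> borel_measurable borel \<Longrightarrow> h \<in> borel_measurable M"
  unfolding good_meas_def using measurable_cong_sets by blast

lemma gm_int:
  fixes h :: "real \<Rightarrow> 'b::{banach,second_countable_topology}"
  assumes "good_meas M K" "h \<in> borel_measurable borel" "\<forall>x\<in>K. norm (h x) \<le> B"
  shows "integrable M h"
proof -
  interpret finite_measure M using assms(1) unfolding good_meas_def by blast
  show ?thesis
    apply (rule integrable_const_bound[where B=B])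
    using gm_AE[OF assms(1)] assms(3) apply (auto elim: AE_mp)
    using gm_meas[OF assms(1,2)] by blast
qed

lemma gm_norm:
  fixes h :: "real \<Rightarrow> 'b::{banach,second_countable_topology}"
  assumes "good_meas M K" "h \<in> borel_measurable borel" "\<forall>x\<in>K. norm (h x) \<le> B"
  shows "norm (integral\<^sup>L M h) \<le> B * measure M UNIV"
proof -
  interpret finite_measure M using assms(1) unfolding good_meas_def by blast
  have "norm (integral\<^sup>L M h) \<le> (\<integral>x. norm (h x) \<partial>M)" by simp
  also have "\<dots> \<le> (\<integral>x. B \<partial>M)"
    apply (rule integral_mono_AE)
    using gm_int[OF assms] apply simp
     apply simp
    using gm_AE[OF assms(1)] assms(3) by (auto elim: AE_mp)
  also have "\<dots> = B * measure M UNIV" using gm_space[OF assms(1)] by simp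
  finally show ?thesis .
qed

lemma compact_dist_pos:
  assumes "compact K" "K \<noteq> {}" "z \<notin> complex_of_real ` K"
  shows "\<exists>d>0. \<forall>x\<in>K. d \<le> norm (z - complex_of_real x)"
proof -
  have "compact (complex_of_real ` K)"
    using assms(1) by (intro compact_continuous_image continuous_intros)
  hence "closed (complex_of_real ` K)" by (rule compact_imp_closed)
  hence "infdist z (complex_of_real ` K) > 0"
    using assms by (intro infdist_pos_not_in_closed) auto
  moreover have "\<forall>x\<in>K. infdist z (complex_of_real ` K) \<le> norm (z - complex_of_real x)"
    by (metis dist_norm image_eqI infdist_le)
  ultimately show ?thesis by blast
qed

lemma norm_div_le:
  fixes a b :: complex
  assumes "norm a \<le> B" "e \<le> norm b" "0 < e"
  shows "norm (a / b) \<le> B / e"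
proof -
  have "0 \<le> B" using assms(1) norm_ge_zero order_trans by blast
  thus ?thesis unfolding norm_divide using assms by (intro frac_le) auto
qed

lemma phi_alg:
  fixes a u v :: complex
  assumes "u \<noteq> 0" "v \<noteq> 0" "u \<noteq> v"
  shows "(a / u - a / v) / (u - v) + a / v^2 = a * (u - v) / (u * v^2)"
proof -
  have "u - v \<noteq> 0" using assms by simp
  thus ?thesis using assms by (simp add: field_simps power2_eq_square)
qed

definition CT :: "real measure \<Rightarrow> (real \<Rightarrow> complex) \<Rightarrow> complex \<Rightarrow> complex" where
  "CT M f z = (\<integral>x. f x / (z - complex_of_real x) \<partial>M)"

lemma CT_has_deriv:
  assumes gm: "good_meas M K" and fm: "f \<in> borel_measurable borel" and fb: "\<forall>x\<in>K. norm (f x) \<le> B"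
    and z: "z \<notin> complex_of_real ` K"
  shows "(CT M f has_field_derivative - (\<integral>x. f x / (z - complex_of_real x)^2 \<partial>M)) (at z)"
proof -
  obtain d where d: "d > 0" "\<forall>x\<in>K. d \<le> norm (z - complex_of_real x)"
    using compact_dist_pos[OF _ _ z] gm unfolding good_meas_def by blast
  have B0: "B \<ge> 0"
  proof -
    obtain x0 where "x0 \<in> K" using gm unfolding good_meas_def by blast
    hence "norm (f x0) \<le> B" using fb by blast
    thus ?thesis using norm_ge_zero[of "f x0"] by linarith
  qed
  define D where "D = - (\<integral>x. f x / (z - complex_of_real x)^2 \<partial>M)"
  define C where "C = 2 * B * measure M UNIV / d^3"
  have fm': "\<And>y. (\<lambda>x. f x / (y - complex_of_real x)) \<in> borel_measurable borel"
    using fm by measurable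
  have fm2: "(\<lambda>x. f x / (z - complex_of_real x)^2) \<in> borel_measurable borel"
    using fm by measurable
  have intz: "integrable M (\<lambda>x. f x / (z - complex_of_real x))"
  proof (rule gm_int[OF gm fm', where B="B/d"], intro ballI)
    fix x assume "x \<in> K"
    thus "norm (f x / (z - complex_of_real x)) \<le> B / d" using d fb B0
      by (intro norm_div_le) auto
  qed
  have int2: "integrable M (\<lambda>x. f x / (z - complex_of_real x)^2)"
  proof (rule gm_int[OF gm fm2, where B="B/d^2"], intro ballI)
    fix x assume "x \<in> K"
    thus "norm (f x / (z - complex_of_real x)^2) \<le> B / d^2" using d fb B0
      by (intro norm_div_le) (auto simp: norm_power intro: power_mono)
  qed
  have bound: "norm ((CT M f y - CT M f z) / (y - z) - D) \<le> C * norm (y - z)"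
    if y: "dist y z < d/2" "y \<noteq> z" for y
  proof -
    have yd: "\<forall>x\<in>K. d/2 \<le> norm (y - complex_of_real x)"
    proof
      fix x assume "x \<in> K"
      have "norm (z - complex_of_real x) \<le> norm (y - complex_of_real x) + norm (y - z)"
        using norm_triangle_ineq4[of "y - complex_of_real x" "y - z"] by simp
      moreover have "d \<le> norm (z - complex_of_real x)" using d \<open>x\<in>K\<close> by blast
      moreover have "norm (y - z) < d/2" using y by (simp add: dist_norm)
      ultimately show "d/2 \<le> norm (y - complex_of_real x)" by linarith
    qed
    have inty: "integrable M (\<lambda>x. f x / (y - complex_of_real x))"
    proof (rule gm_int[OF gm fm', where B="B/(d/2)"], intro ballI)
      fix x assume "x \<in> K"
      thus "norm (f x / (y - complex_of_real x)) \<le> B / (d/2)" using d fb B0 yd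
        by (intro norm_div_le) auto
    qed
    define \<phi> where "\<phi> x = (f x / (y - complex_of_real x) - f x / (z - complex_of_real x)) / (y - z)
        + f x / (z - complex_of_real x)^2" for x
    have eq: "(CT M f y - CT M f z) / (y - z) - D = integral\<^sup>L M \<phi>"
      unfolding \<phi>_def CT_def D_def
      using inty intz int2 by (simp add: Bochner_Integration.integral_diff Bochner_Integration.integral_add)
    have "norm (integral\<^sup>L M \<phi>) \<le> (B * norm (y - z) / ((d/2) * d^2)) * measure M UNIV"
    proof (rule gm_norm[OF gm])
      show "\<phi> \<in> borel_measurable borel" unfolding \<phi>_def using fm by measurable
      show "\<forall>x\<in>K. norm (\<phi> x) \<le> B * norm (y - z) / (d / 2 * d\<^sup>2)"
      proof
        fix x assume x: "x \<in> K"
        have ny: "y - complex_of_real x \<noteq> 0" using yd x d by fastforce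
        have nz: "z - complex_of_real x \<noteq> 0" using d x by fastforce
        have "\<phi> x = f x * (y - z) / ((y - complex_of_real x) * (z - complex_of_real x)^2)"
          unfolding \<phi>_def using phi_alg[OF ny nz, of "f x"] y(2) by simp
        moreover have "norm (f x * (y - z)) \<le> B * norm (y - z)"
          unfolding norm_mult using fb x by (intro mult_right_mono) auto
        moreover have "(d/2) * d^2 \<le> norm ((y - complex_of_real x) * (z - complex_of_real x)^2)"
          unfolding norm_mult norm_power using yd d x
          by (intro mult_mono power_mono) auto
        ultimately show "norm (\<phi> x) \<le> B * norm (y - z) / (d / 2 * d\<^sup>2)"
          using d by (simp only:) (rule norm_div_le, auto)
      qed
    qed
    also have "\<dots> = C * norm (y - z)" unfolding C_def using d by (simp add: field_simps power3_eq_cube power2_eq_square)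
    finally show ?thesis using eq by simp
  qed
  have "((\<lambda>y. (CT M f y - CT M f z) / (y - z) - D) \<longlongrightarrow> 0) (at z)"
  proof (rule Lim_null_comparison)
    show "\<forall>\<^sub>F y in at z. norm ((CT M f y - CT M f z) / (y - z) - D) \<le> C * norm (y - z)"
      unfolding eventually_at using d bound by (intro exI[of _ "d/2"]) auto
    show "((\<lambda>y. C * norm (y - z)) \<longlongrightarrow> 0) (at z)"
    proof -
      have "((\<lambda>y. norm (y - z)) \<longlongrightarrow> norm (z - z)) (at z)"
        by (intro tendsto_intros)
      hence "((\<lambda>y. C * norm (y - z)) \<longlongrightarrow> C * norm (z - z)) (at z)"
        by (intro tendsto_intros)
      thus ?thesis by simp
    qed
  qed
  hence "((\<lambda>y. (CT M f y - CT M f z) / (y - z)) \<longlongrightarrow> D) (at z)"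
    by (simp add: LIM_zero_iff)
  thus ?thesis unfolding D_def has_field_derivative_iff .
qed

lemma CT_holo:
  assumes gm: "good_meas M K" and fm: "f \<in> borel_measurable borel" and fb: "\<forall>x\<in>K. norm (f x) \<le> B"
  shows "CT M f holomorphic_on (- (complex_of_real ` K))"
  unfolding holomorphic_on_def
proof
  fix z assume "z \<in> - complex_of_real ` K"
  hence "z \<notin> complex_of_real ` K" by simp
  from CT_has_deriv[OF assms this] show "CT M f field_differentiable at z within - complex_of_real ` K"
    using field_differentiable_at_within field_differentiable_def by blast
qed

lemma in_class_good:
  assumes "in_class_M M c {a..b}"
  shows "good_meas M {a..b}" "msupp M \<subseteq> {a..b}" "infinite (msupp M)" "c = 1 \<or> c = -1"
    "finite_measure M" "sets M = sets borel"
proof -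
  note A = assms[unfolded in_class_M_def]
  show sub: "msupp M \<subseteq> {a..b}" using A hull_subset by metis
  show inf: "infinite (msupp M)" using A by blast
  show "c = 1 \<or> c = -1" using A by blast
  show "finite_measure M" "sets M = sets borel" using A by blast+
  have ne: "{a..b} \<noteq> {}" using sub inf by (metis finite.emptyI subset_empty)
  define F where "F = {ball x e | x e. e > 0 \<and> emeasure M (ball x e) = 0}"
  have "\<And>S. S \<in> F \<Longrightarrow> open S" unfolding F_def by auto
  then obtain F' where F': "F' \<subseteq> F" "countable F'" "\<Union>F' = \<Union>F" by (rule Lindelof)
  have sM: "\<And>S. open S \<Longrightarrow> S \<in> sets M" using A by (simp add: borel_open)
  have "(\<Union>S\<in>F'. S) \<in> null_sets M"
  proof (rule null_sets_UN'[OF F'(2)])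
    fix S assume "S \<in> F'"
    hence "S \<in> F" using F' by blast
    then obtain x e where "S = ball x e" "emeasure M (ball x e) = 0" unfolding F_def by blast
    thus "S \<in> null_sets M" using sM by auto
  qed
  moreover have "UNIV - {a..b} \<subseteq> (\<Union>S\<in>F'. S)"
  proof
    fix x assume "x \<in> UNIV - {a..b}"
    hence "x \<notin> msupp M" using sub by blast
    then obtain e where "e > 0" "emeasure M (ball x e) = 0" unfolding msupp_def by auto
    hence "ball x e \<in> F" unfolding F_def by blast
    moreover have "x \<in> ball x e" using \<open>e > 0\<close> by simp
    ultimately have "x \<in> \<Union>F" by blast
    thus "x \<in> (\<Union>S\<in>F'. S)" using F'(3) by simp
  qed
  moreover have "UNIV - {a..b} \<in> sets M" using sM by (simp add: open_Diff)
  ultimately have "UNIV - {a..b} \<in> null_sets M" using null_sets_subset by blast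
  hence "emeasure M (UNIV - {a..b}) = 0" by blast
  thus "good_meas M {a..b}" unfolding good_meas_def using A ne by auto
qed

declare nik.simps[simp del]

lemma nik_lt: "j < k \<Longrightarrow> nik \<mu> c j k z = of_real (c j) * CT (\<mu> j) (\<lambda>x. nik \<mu> c (Suc j) k (of_real x)) z"
  by (subst nik.simps) (simp add: CT_def)

lemma nik_eq: "nik \<mu> c k k z = of_real (c k) * CT (\<mu> k) (\<lambda>x. 1) z"
  by (subst nik.simps) (simp add: CT_def)

lemma CT_meas:
  assumes "finite_measure M" "sets M = sets borel" "f \<in> borel_measurable borel"
  shows "(\<lambda>x. CT M f (of_real x)) \<in> borel_measurable borel"
proof -
  interpret finite_measure M by fact
  have "(\<lambda>(x, y). f y / (complex_of_real x - complex_of_real y)) \<in> borel_measurable (borel \<Otimes>\<^sub>M borel)"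
    using assms(3) by measurable
  hence "(\<lambda>(x, y). f y / (complex_of_real x - complex_of_real y)) \<in> borel_measurable (borel \<Otimes>\<^sub>M M)"
    using measurable_cong_sets[OF sets_pair_measure_cong[OF refl assms(2)] refl] by blast
  from borel_measurable_lebesgue_integral[OF this] show ?thesis unfolding CT_def by simp
qed

lemma CT_real:
  assumes "\<And>y. Im (f y) = 0"
  shows "Im (CT M f (of_real x)) = 0"
proof -
  have "\<And>y. f y = of_real (Re (f y))" using assms by (simp add: complex_eq_iff)
  hence "\<And>y. f y / (complex_of_real x - complex_of_real y) = of_real (Re (f y) / (x - y))"
    by (metis of_real_diff of_real_divide)
  hence "(\<lambda>y. f y / (complex_of_real x - complex_of_real y)) = (\<lambda>y. of_real (Re (f y) / (x - y)))"
    by (rule ext)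
  hence "CT M f (of_real x) = of_real (\<integral>y. Re (f y) / (x - y) \<partial>M)"
    unfolding CT_def by (simp only: integral_complex_of_real)
  thus ?thesis by simp
qed

lemma cont_bounded:
  assumes "continuous_on K f" "compact K"
  shows "\<exists>B. \<forall>x\<in>K. norm (f x) \<le> B"
proof -
  have "bounded (f ` K)" using assms compact_continuous_image compact_imp_bounded by blast
  thus ?thesis unfolding bounded_iff by auto
qed

lemma nik_props:
  assumes A2: "\<And>j. 1 \<le> j \<Longrightarrow> j \<le> m \<Longrightarrow> a j < b j"
    and A3: "\<And>j. 1 \<le> j \<Longrightarrow> j < m \<Longrightarrow> {a j..b j} \<inter> {a (Suc j)..b (Suc j)} = {}"
    and A4: "\<And>j. 1 \<le> j \<Longrightarrow> j \<le> m \<Longrightarrow> in_class_M (\<mu> j) (c j) {a j..b j}"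
    and km: "k \<le> m" and j1: "1 \<le> j" and jk: "j \<le> k"
  shows "(\<lambda>x. nik \<mu> c j k (of_real x)) \<in> borel_measurable borel \<and> (\<forall>x. Im (nik \<mu> c j k (of_real x)) = 0)
     \<and> nik \<mu> c j k holomorphic_on - (complex_of_real ` {a j..b j})"
  using jk j1
proof (induction j rule: inc_induct)
  case base
  have "in_class_M (\<mu> k) (c k) {a k..b k}" using A4 base km by blast
  note ic = in_class_good[OF this]
  have m1: "(\<lambda>x::real. 1::complex) \<in> borel_measurable borel" by simp
  show ?case unfolding nik_eq
  proof (intro conjI allI)
    show "(\<lambda>x. complex_of_real (c k) * CT (\<mu> k) (\<lambda>x. 1) (complex_of_real x)) \<in> borel_measurable borel"
      using CT_meas[OF ic(5,6) m1] by measurable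
    fix x
    show "Im (complex_of_real (c k) * CT (\<mu> k) (\<lambda>x. 1) (complex_of_real x)) = 0"
      using CT_real[of "\<lambda>x. 1" "\<mu> k" x] by simp
  next
    have "CT (\<mu> k) (\<lambda>x. 1) holomorphic_on - complex_of_real ` {a k..b k}"
      using CT_holo[OF ic(1) m1, of 1] by simp
    thus "(\<lambda>z. complex_of_real (c k) * CT (\<mu> k) (\<lambda>x. 1) z) holomorphic_on - complex_of_real ` {a k..b k}"
      by (intro holomorphic_on_mult holomorphic_on_const)
  qed
next
  case (step n)
  hence n1: "1 \<le> n" and nm: "n < m" using km by auto
  have "in_class_M (\<mu> n) (c n) {a n..b n}" using A4 n1 nm by simp
  note ic = in_class_good[OF this]
  have IH: "(\<lambda>x. nik \<mu> c (Suc n) k (of_real x)) \<in> borel_measurable borel"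
     "\<And>x. Im (nik \<mu> c (Suc n) k (of_real x)) = 0"
     "nik \<mu> c (Suc n) k holomorphic_on - (complex_of_real ` {a (Suc n)..b (Suc n)})"
    using step(3) n1 by simp_all
  have "complex_of_real ` {a n..b n} \<subseteq> - (complex_of_real ` {a (Suc n)..b (Suc n)})"
    using A3[OF n1 nm] by (auto simp: disjoint_iff)
  hence "continuous_on (complex_of_real ` {a n..b n}) (nik \<mu> c (Suc n) k)"
    using IH(3) holomorphic_on_imp_continuous_on holomorphic_on_subset by blast
  hence "continuous_on {a n..b n} (\<lambda>x. nik \<mu> c (Suc n) k (of_real x))"
    by (rule continuous_on_compose2[where f=complex_of_real]) (auto intro: continuous_intros)
  then obtain B where B: "\<forall>x\<in>{a n..b n}. norm (nik \<mu> c (Suc n) k (of_real x)) \<le> B"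
    using cont_bounded by blast
  show ?case unfolding nik_lt[OF step(2)]
  proof (intro conjI allI)
    show "(\<lambda>x. complex_of_real (c n) * CT (\<mu> n) (\<lambda>x. nik \<mu> c (Suc n) k (complex_of_real x)) (complex_of_real x)) \<in> borel_measurable borel"
      using CT_meas[OF ic(5,6) IH(1)] by measurable
    fix x
    show "Im (complex_of_real (c n) * CT (\<mu> n) (\<lambda>x. nik \<mu> c (Suc n) k (complex_of_real x)) (complex_of_real x)) = 0"
      using CT_real[of "\<lambda>x. nik \<mu> c (Suc n) k (complex_of_real x)" "\<mu> n" x] IH(2) by simp
  next
    have "CT (\<mu> n) (\<lambda>x. nik \<mu> c (Suc n) k (complex_of_real x)) holomorphic_on - complex_of_real ` {a n..b n}"
      using CT_holo[OF ic(1) IH(1) B] .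
    thus "(\<lambda>z. complex_of_real (c n) * CT (\<mu> n) (\<lambda>x. nik \<mu> c (Suc n) k (complex_of_real x)) z) holomorphic_on - complex_of_real ` {a n..b n}"
      by (intro holomorphic_on_mult holomorphic_on_const)
  qed
qed

lemma higher_deriv_poly: "(deriv ^^ i) (poly p) = poly ((pderiv ^^ i) (p :: complex poly))"
proof (induction i)
  case 0 thus ?case by simp
next
  case (Suc i)
  have "(deriv ^^ Suc i) (poly p) = deriv (poly ((pderiv ^^ i) p))" using Suc by simp
  also have "\<dots> = poly (pderiv ((pderiv ^^ i) p))"
    by (rule ext) (rule DERIV_imp_deriv, rule poly_DERIV)
  finally show ?case by simp
qed

lemma pderiv_funpow_0: "(pderiv ^^ i) 0 = 0"
  by (induction i) auto

lemma order_higher_pderiv: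
  fixes p :: "complex poly"
  assumes "k \<le> order a p" "i < k"
  shows "poly ((pderiv ^^ i) p) a = 0"
  using assms
proof (induction i arbitrary: p k)
  case 0
  hence "order a p \<noteq> 0" by linarith
  hence "poly p a = 0" using order_root by blast
  thus ?case by simp
next
  case (Suc i)
  show ?case
  proof (cases "p = 0")
    case True thus ?thesis by (simp add: pderiv_funpow_0)
  next
    case False
    have "order a p \<noteq> 0" using Suc.prems by linarith
    hence "poly p a = 0" using order_root by blast
    hence o: "order a p = Suc (order a (pderiv p))" using order_pderiv[OF False] by blast
    have "poly ((pderiv ^^ i) (pderiv p)) a = 0"
      by (rule Suc.IH[of "k - 1"]) (use Suc.prems o in auto)
    thus ?thesis by (simp add: funpow_Suc_right del: funpow.simps)
  qed
qed

lemma higher_pderiv_order: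
  fixes p :: "complex poly"
  assumes "p \<noteq> 0" "\<And>i. i < k \<Longrightarrow> poly ((pderiv ^^ i) p) a = 0"
  shows "k \<le> order a p"
  using assms
proof (induction k arbitrary: p)
  case 0 thus ?case by simp
next
  case (Suc k)
  have r: "poly p a = 0" using Suc.prems(2)[of 0] by simp
  have pd: "pderiv p \<noteq> 0"
  proof
    assume "pderiv p = 0"
    then obtain h where "p = [:h:]" using pderiv_iszero by blast
    thus False using r Suc.prems(1) by simp
  qed
  have "k \<le> order a (pderiv p)"
  proof (rule Suc.IH[OF pd])
    fix i assume "i < k"
    thus "poly ((pderiv ^^ i) (pderiv p)) a = 0"
      using Suc.prems(2)[of "Suc i"] by (simp add: funpow_Suc_right del: funpow.simps)
  qed
  thus ?case using order_pderiv[OF Suc.prems(1) r] by simp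
qed

lemma sum_order_le_degree:
  fixes p :: "complex poly"
  assumes "finite U" "p \<noteq> 0"
  shows "(\<Sum>u\<in>U. order u p) \<le> degree p"
  using assms
proof (induction U arbitrary: p rule: finite_induct)
  case empty thus ?case by simp
next
  case (insert u U)
  obtain q where q: "p = [:- u, 1:] ^ order u p * q" "\<not> [:- u, 1:] dvd q"
    using order_decomp[OF insert.prems] by blast
  have q0: "q \<noteq> 0" using q(2) by auto
  have l0: "[:- u, 1:] ^ order u p \<noteq> 0" by simp
  have ov: "order v p = order v q" if "v \<in> U" for v
  proof -
    have "v \<noteq> u" using that insert.hyps by blast
    hence "poly ([:- u, 1:] ^ order u p) v \<noteq> 0" by (simp add: poly_power)
    hence "order v ([:- u, 1:] ^ order u p) = 0" using order_root by blast
    thus ?thesis using q(1) order_mult[of "[:- u, 1:] ^ order u p" q v] insert.prems by simp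
  qed
  have "(\<Sum>v\<in>insert u U. order v p) = order u p + (\<Sum>v\<in>U. order v q)"
    using insert.hyps ov by simp
  also have "\<dots> \<le> order u p + degree q" using insert.IH[OF q0] by simp
  also have "\<dots> = degree p"
    by (subst q(1), subst degree_mult_eq[OF l0 q0]) (simp add: degree_linear_power)
  finally show ?case .
qed

lemma cpoly_fun: "cpoly p = poly (map_poly complex_of_real p)"
  by (rule ext) (simp add: cpoly_def)

lemma cpoly_altdef: "cpoly p z = (\<Sum>i\<le>degree p. of_real (coeff p i) * z^i)"
  unfolding cpoly_def poly_altdef by (simp add: degree_map_poly coeff_map_poly)

lemma cpoly_of_real: "cpoly p (of_real x) = of_real (poly p x)"
  unfolding cpoly_altdef poly_altdef by simp

lemma map_poly_of_real_add: "map_poly complex_of_real (p + q) = map_poly of_real p + map_poly of_real q"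
  by (intro poly_eqI) (simp add: coeff_map_poly)

lemma map_poly_of_real_diff: "map_poly complex_of_real (p - q) = map_poly of_real p - map_poly of_real q"
  by (intro poly_eqI) (simp add: coeff_map_poly)

lemma cpoly_add: "cpoly (p + q) z = cpoly p z + cpoly q z"
  unfolding cpoly_def map_poly_of_real_add by simp

lemma cpoly_diff: "cpoly (p - q) z = cpoly p z - cpoly q z"
  unfolding cpoly_def map_poly_of_real_diff by simp

lemma cpoly_smult: "cpoly (smult c p) z = of_real c * cpoly p z"
  unfolding cpoly_def by (simp add: map_poly_smult)

lemma cpoly_monom: "cpoly (monom c n) z = of_real c * z ^ n"
  unfolding cpoly_def by (simp add: map_poly_monom poly_monom)

lemma cpoly_0: "cpoly 0 z = 0"
  unfolding cpoly_def by simp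

lemma cpoly_sum: "cpoly (\<Sum>i\<in>A. f i) z = (\<Sum>i\<in>A. cpoly (f i) z)"
proof (induction A rule: infinite_finite_induct)
  case (infinite A) thus ?case by (simp add: cpoly_0)
next
  case empty thus ?case by (simp add: cpoly_0)
next
  case (insert x F) thus ?case by (simp add: cpoly_add)
qed

lemma poly_meas[measurable]: "poly (s::real poly) \<in> borel_measurable borel"
  by (intro borel_measurable_continuous_onI) (auto intro: continuous_intros)

lemma ofr_meas[measurable]: "(\<lambda>x::real. complex_of_real x) \<in> borel_measurable borel"
  by (intro borel_measurable_continuous_onI) (auto intro: continuous_intros)

definition ee :: "real poly \<Rightarrow> nat \<Rightarrow> real \<Rightarrow> real" where
  "ee s j x = (\<Sum>i\<in>{Suc j..degree s}. coeff s i * x ^ (i - Suc j))"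

definition DD :: "real measure \<Rightarrow> real poly \<Rightarrow> (real \<Rightarrow> real) \<Rightarrow> real poly" where
  "DD M s f = (\<Sum>j<degree s. monom (\<integral>x. f x * ee s j x \<partial>M) j)"

lemma ee_cont: "continuous_on A (ee s j)"
  unfolding ee_def by (intro continuous_intros)

lemma ee_meas: "ee s j \<in> borel_measurable borel"
  using ee_cont[of UNIV] borel_measurable_continuous_onI by blast

lemma coeff_DD: "coeff (DD M s f) i = (if i < degree s then (\<integral>x. f x * ee s i x \<partial>M) else 0)"
  unfolding DD_def by (simp add: coeff_sum coeff_monom)

lemma cpoly_DD: "cpoly (DD M s f) z = (\<Sum>j<degree s. z ^ j * of_real (\<integral>x. f x * ee s j x \<partial>M))"
  unfolding DD_def cpoly_sum cpoly_monom by (simp add: mult.commute)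

lemma poly_diff_ee:
  "cpoly s z - of_real (poly s x) = (z - of_real x) * (\<Sum>j<degree s. z ^ j * of_real (ee s j x))"
proof -
  define d where "d = degree s"
  have "cpoly s z - of_real (poly s x) = (\<Sum>i\<le>d. of_real (coeff s i) * (z ^ i - of_real x ^ i))"
    unfolding cpoly_altdef poly_altdef d_def by (simp add: sum_subtractf right_diff_distrib)
  also have "\<dots> = (\<Sum>i\<le>d. (z - of_real x) * (\<Sum>j<i. of_real (coeff s i) * of_real x ^ (i - Suc j) * z ^ j))"
    by (intro sum.cong refl) (simp add: power_diff_sumr2 sum_distrib_left mult_ac)
  also have "\<dots> = (z - of_real x) * (\<Sum>i\<le>d. \<Sum>j<i. of_real (coeff s i) * of_real x ^ (i - Suc j) * z ^ j)"
    by (simp add: sum_distrib_left)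
  also have "(\<Sum>i\<le>d. \<Sum>j<i. of_real (coeff s i) * of_real x ^ (i - Suc j) * z ^ j)
      = (\<Sum>j<d. \<Sum>i\<in>{Suc j..d}. of_real (coeff s i) * of_real x ^ (i - Suc j) * z ^ j)"
    by (rule sum.nested_swap')
  also have "\<dots> = (\<Sum>j<d. z ^ j * of_real (ee s j x))"
    unfolding ee_def d_def by (intro sum.cong refl) (simp add: sum_distrib_left mult_ac)
  finally show ?thesis unfolding d_def .
qed

lemma gm_compact: "good_meas M K \<Longrightarrow> compact K"
  unfolding good_meas_def by blast

lemma gm_int_cont:
  fixes h :: "real \<Rightarrow> 'b::{banach,second_countable_topology}"
  assumes "good_meas M K" "h \<in> borel_measurable borel" "continuous_on K h"
  shows "integrable M h"
proof -
  obtain B where "\<forall>x\<in>K. norm (h x) \<le> B" using cont_bounded[OF assms(3) gm_compact[OF assms(1)]] by blast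
  thus ?thesis using gm_int[OF assms(1,2)] by blast
qed

lemma CT_poly:
  assumes gm: "good_meas M K" and fm: "f \<in> borel_measurable borel" and fc: "continuous_on K f"
    and z: "z \<notin> complex_of_real ` K"
  shows "cpoly s z * CT M (\<lambda>x. of_real (f x)) z
       = CT M (\<lambda>x. of_real (f x * poly s x)) z + cpoly (DD M s f) z"
proof -
  define d where "d = degree s"
  have nz: "z - complex_of_real x \<noteq> 0" if "x \<in> K" for x using z that by auto
  have cont_div: "continuous_on K (\<lambda>x. of_real (h x) / (z - complex_of_real x))"
    if "continuous_on K h" for h
    using that nz by (intro continuous_intros) auto
  have int1: "integrable M (\<lambda>x. of_real (f x * poly s x) / (z - complex_of_real x))"
  proof (rule gm_int_cont[OF gm _ cont_div])
    show "(\<lambda>x. complex_of_real (f x * poly s x) / (z - complex_of_real x)) \<in> borel_measurable borel"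
      using fm by measurable
    show "continuous_on K (\<lambda>x. f x * poly s x)" using fc by (intro continuous_intros)
  qed
  have int2: "integrable M (\<lambda>x. z ^ j * complex_of_real (f x * ee s j x))" for j
  proof (rule gm_int_cont[OF gm])
    show "(\<lambda>x. z ^ j * complex_of_real (f x * ee s j x)) \<in> borel_measurable borel"
      using fm ee_meas by measurable
    show "continuous_on K (\<lambda>x. z ^ j * complex_of_real (f x * ee s j x))"
      using fc ee_cont by (intro continuous_intros) auto
  qed

  have "cpoly s z * CT M (\<lambda>x. of_real (f x)) z = (\<integral>x. cpoly s z * (of_real (f x) / (z - complex_of_real x)) \<partial>M)"
    unfolding CT_def by (simp only: integral_mult_right_zero)
  also have "\<dots> = (\<integral>x. of_real (f x * poly s x) / (z - complex_of_real x)
                      + (\<Sum>j<d. z ^ j * of_real (f x * ee s j x)) \<partial>M)"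
  proof (rule integral_cong_AE)
    show "(\<lambda>x. cpoly s z * (complex_of_real (f x) / (z - complex_of_real x))) \<in> borel_measurable M"
      by (rule gm_meas[OF gm]) (use fm in measurable)
    show "(\<lambda>x. complex_of_real (f x * poly s x) / (z - complex_of_real x) +
          (\<Sum>j<d. z ^ j * complex_of_real (f x * ee s j x))) \<in> borel_measurable M"
      by (rule gm_meas[OF gm]) (use fm ee_meas in measurable)
    show "AE x in M. cpoly s z * (complex_of_real (f x) / (z - complex_of_real x)) =
        complex_of_real (f x * poly s x) / (z - complex_of_real x) +
        (\<Sum>j<d. z ^ j * complex_of_real (f x * ee s j x))"
      using gm_AE[OF gm]
    proof (rule AE_mp, intro AE_I2 impI)
      fix x assume x: "x \<in> K"
      define u where "u = z - complex_of_real x"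
      define S where "S = (\<Sum>j<d. z ^ j * of_real (ee s j x))"
      have u: "u \<noteq> 0" using nz[OF x] u_def by simp
      have cs: "cpoly s z = of_real (poly s x) + u * S"
        using poly_diff_ee[of s z x] unfolding u_def S_def d_def by (simp add: algebra_simps)
      have "(\<Sum>j<d. z ^ j * complex_of_real (f x * ee s j x)) = of_real (f x) * S"
        unfolding S_def by (simp add: sum_distrib_left mult_ac)
      moreover have "cpoly s z * (of_real (f x) / u) = of_real (f x * poly s x) / u + of_real (f x) * S"
        unfolding cs using u by (simp add: field_simps)
      ultimately show "cpoly s z * (complex_of_real (f x) / (z - complex_of_real x)) =
        complex_of_real (f x * poly s x) / (z - complex_of_real x) +
        (\<Sum>j<d. z ^ j * complex_of_real (f x * ee s j x))"
        unfolding u_def by simp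
    qed
  qed
  also have "\<dots> = CT M (\<lambda>x. of_real (f x * poly s x)) z + (\<Sum>j<d. \<integral>x. z ^ j * of_real (f x * ee s j x) \<partial>M)"
    unfolding CT_def
    by (subst Bochner_Integration.integral_add) (use int1 int2 in \<open>auto intro!: integral_sum\<close>)
  also have "(\<Sum>j<d. \<integral>x. z ^ j * of_real (f x * ee s j x) \<partial>M) = cpoly (DD M s f) z"
    unfolding cpoly_DD d_def by (simp only: integral_mult_right_zero integral_complex_of_real)
  finally show ?thesis .
qed

lemma const_sign:
  fixes g :: "real \<Rightarrow> real"
  assumes cont: "continuous_on {a..b} g" and nz: "\<forall>x\<in>{a<..<b}. g x \<noteq> 0"
  shows "(\<forall>x\<in>{a..b}. 0 \<le> g x) \<or> (\<forall>x\<in>{a..b}. g x \<le> 0)"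
proof (rule ccontr)
  assume "\<not> ?thesis"
  then obtain x1 x2 where x: "x1 \<in> {a..b}" "x2 \<in> {a..b}" "g x1 < 0" "0 < g x2"
    by (auto simp: not_le)
  have c: "continuous_on {min x1 x2..max x1 x2} g"
    using x by (intro continuous_on_subset[OF cont]) auto
  obtain t where t: "min x1 x2 \<le> t" "t \<le> max x1 x2" "g t = 0"
  proof (cases "x1 \<le> x2")
    case True
    then obtain t where "x1 \<le> t" "t \<le> x2" "g t = 0"
      using IVT'[of g x1 0 x2] x c by auto
    thus ?thesis using that True by auto
  next
    case False
    then obtain t where "x2 \<le> t" "t \<le> x1" "g t = 0"
      using IVT2'[of g x1 0 x2] x c by auto
    thus ?thesis using that False by auto
  qed
  have "t \<noteq> x1" "t \<noteq> x2" using t x by auto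
  hence "t \<in> {a<..<b}" using t x by auto
  thus False using nz t by auto
qed

lemma sign_poly:
  fixes g :: "real \<Rightarrow> real"
  assumes "finite F" "continuous_on {a..b} g" "\<forall>x\<in>{a<..<b}. x \<notin> F \<longrightarrow> g x \<noteq> 0"
  shows "\<exists>q. q \<noteq> 0 \<and> degree q \<le> card F \<and> (\<forall>x>b. poly q x \<noteq> 0) \<and> (\<forall>x\<in>{a..b}. 0 \<le> poly q x * g x)"
  using assms
proof (induction "card F" arbitrary: F b rule: less_induct)
  case less
  show ?case
  proof (cases "F \<inter> {a<..<b} = {}")
    case True
    hence "\<forall>x\<in>{a<..<b}. g x \<noteq> 0" using less.prems by auto
    from const_sign[OF less.prems(2) this] show ?thesis
    proof
      assume "\<forall>x\<in>{a..b}. 0 \<le> g x"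
      thus ?thesis by (intro exI[of _ 1]) auto
    next
      assume "\<forall>x\<in>{a..b}. g x \<le> 0"
      thus ?thesis by (intro exI[of _ "-1"]) auto
    qed
  next
    case False
    define y where "y = Max (F \<inter> {a<..<b})"
    have fin: "finite (F \<inter> {a<..<b})" using less.prems by auto
    have yF: "y \<in> F \<inter> {a<..<b}" unfolding y_def using Max_in[OF fin False] .
    have ymax: "\<And>x. x \<in> F \<inter> {a<..<b} \<Longrightarrow> x \<le> y" unfolding y_def using Max_ge[OF fin] by blast
    define F' where "F' = F - {y}"
    have cardF2: "card F = Suc (card F')"
      unfolding F'_def using yF less.prems(1) card_Suc_Diff1[of F y] by simp
    hence cardF: "card F' < card F" "card F = Suc (card F')" by simp_all
    have "\<exists>q. q \<noteq> 0 \<and> degree q \<le> card F' \<and> (\<forall>x>y. poly q x \<noteq> 0) \<and> (\<forall>x\<in>{a..y}. 0 \<le> poly q x * g x)"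
    proof (rule less.hyps[OF cardF(1)])
      show "finite F'" using less.prems(1) unfolding F'_def by auto
      show "continuous_on {a..y} g" using yF by (intro continuous_on_subset[OF less.prems(2)]) auto
      show "\<forall>x\<in>{a<..<y}. x \<notin> F' \<longrightarrow> g x \<noteq> 0" using less.prems(3) yF unfolding F'_def by auto
    qed
    then obtain q1 where q1: "q1 \<noteq> 0" "degree q1 \<le> card F'" "\<forall>x>y. poly q1 x \<noteq> 0"
      "\<forall>x\<in>{a..y}. 0 \<le> poly q1 x * g x" by blast
    have gs: "(\<forall>x\<in>{y..b}. 0 \<le> g x) \<or> (\<forall>x\<in>{y..b}. g x \<le> 0)"
    proof (rule const_sign)
      show "continuous_on {y..b} g" using yF by (intro continuous_on_subset[OF less.prems(2)]) auto
      show "\<forall>x\<in>{y<..<b}. g x \<noteq> 0"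
      proof
        fix x assume x: "x \<in> {y<..<b}"
        hence "x \<notin> F" using ymax yF by force
        thus "g x \<noteq> 0" using less.prems(3) x yF by auto
      qed
    qed
    have qs: "(\<forall>x\<in>{y..b}. 0 \<le> poly q1 x) \<or> (\<forall>x\<in>{y..b}. poly q1 x \<le> 0)"
      by (rule const_sign) (use q1(3) in \<open>auto intro: continuous_intros\<close>)
    have same: ?thesis if "\<forall>x\<in>{y..b}. 0 \<le> poly q1 x * g x"
    proof (intro exI[of _ q1] conjI)
      show "\<forall>x\<in>{a..b}. 0 \<le> poly q1 x * g x"
      proof
        fix x assume "x \<in> {a..b}"
        thus "0 \<le> poly q1 x * g x" using that q1(4) by (cases "x \<le> y") auto
      qed
      show "\<forall>x>b. poly q1 x \<noteq> 0" using q1(3) yF by auto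
    qed (use q1 cardF in auto)
    have opp: ?thesis if "\<forall>x\<in>{y..b}. poly q1 x * g x \<le> 0"
    proof (intro exI[of _ "[:y, -1:] * q1"] conjI)
      have l0: "[:y, -1:] \<noteq> (0::real poly)" by simp
      show "[:y, -1:] * q1 \<noteq> 0" using l0 q1(1) by (metis mult_eq_0_iff)
      show "degree ([:y, -1:] * q1) \<le> card F"
        using q1(1,2) cardF by (subst degree_mult_eq) auto
      show "\<forall>x>b. poly ([:y, -1:] * q1) x \<noteq> 0" using q1(3) yF by auto
      show "\<forall>x\<in>{a..b}. 0 \<le> poly ([:y, -1:] * q1) x * g x"
      proof
        fix x assume x: "x \<in> {a..b}"
        have e: "poly ([:y, -1:] * q1) x * g x = (y - x) * (poly q1 x * g x)" by (simp add: algebra_simps)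
        show "0 \<le> poly ([:y, -1:] * q1) x * g x"
        proof (cases "x \<le> y")
          case True thus ?thesis unfolding e using q1(4) x by auto
        next
          case False
          hence "poly q1 x * g x \<le> 0" using that x by auto
          thus ?thesis unfolding e using False by (intro mult_nonpos_nonpos) auto
        qed
      qed
    qed
    show ?thesis
    proof (cases "(\<forall>x\<in>{y..b}. 0 \<le> poly q1 x * g x)")
      case True thus ?thesis by (rule same)
    next
      case False
      have "\<forall>x\<in>{y..b}. poly q1 x * g x \<le> 0"
      proof (cases "\<forall>x\<in>{y..b}. 0 \<le> g x")
        case g: True
        show ?thesis
        proof (cases "\<forall>x\<in>{y..b}. 0 \<le> poly q1 x")
          case True
          hence "\<forall>x\<in>{y..b}. 0 \<le> poly q1 x * g x" using g by simp
          thus ?thesis using False by blast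
        next
          case q: False
          hence "\<forall>x\<in>{y..b}. poly q1 x \<le> 0" using qs by blast
          thus ?thesis using g by (simp add: mult_nonpos_nonneg)
        qed
      next
        case g: False
        hence g': "\<forall>x\<in>{y..b}. g x \<le> 0" using gs by blast
        show ?thesis
        proof (cases "\<forall>x\<in>{y..b}. 0 \<le> poly q1 x")
          case True
          thus ?thesis using g' by (simp add: mult_nonneg_nonpos)
        next
          case q: False
          hence "\<forall>x\<in>{y..b}. poly q1 x \<le> 0" using qs by blast
          hence "\<forall>x\<in>{y..b}. 0 \<le> poly q1 x * g x" using g' by (simp add: mult_nonpos_nonpos)
          thus ?thesis using False by blast
        qed
      qed
      thus ?thesis by (rule opp)
    qed
  qed
qed

lemma creal_pderiv:
  fixes p :: "complex poly"
  assumes "map_poly cnj p = p"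
  shows "map_poly cnj (pderiv p) = pderiv p"
proof (intro poly_eqI)
  fix n
  have "cnj (coeff p (Suc n)) = coeff p (Suc n)"
    using arg_cong[OF assms, of "\<lambda>q. coeff q (Suc n)"] by (simp add: coeff_map_poly)
  thus "coeff (map_poly cnj (pderiv p)) n = coeff (pderiv p) n"
    by (simp add: coeff_map_poly coeff_pderiv)
qed

lemma creal_pderiv_funpow:
  fixes p :: "complex poly"
  assumes "map_poly cnj p = p"
  shows "map_poly cnj ((pderiv ^^ i) p) = (pderiv ^^ i) p"
  by (induction i) (simp_all add: assms creal_pderiv)

lemma creal_poly_cnj:
  fixes q :: "complex poly"
  assumes "map_poly cnj q = q"
  shows "poly q (cnj z) = cnj (poly q z)"
  using poly_cnj[of q z] assms by simp

lemma creal_order_cnj: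
  fixes p :: "complex poly"
  assumes "map_poly cnj p = p" "p \<noteq> 0" "k \<le> order z p"
  shows "k \<le> order (cnj z) p"
proof (rule higher_pderiv_order[OF assms(2)])
  fix i assume "i < k"
  hence "poly ((pderiv ^^ i) p) z = 0" using order_higher_pderiv[OF assms(3)] by blast
  thus "poly ((pderiv ^^ i) p) (cnj z) = 0"
    using creal_poly_cnj[OF creal_pderiv_funpow[OF assms(1)]] by simp
qed

lemma creal_real_poly:
  fixes w :: "complex poly"
  assumes "map_poly cnj w = w"
  shows "w = map_poly complex_of_real (map_poly Re w)"
proof (intro poly_eqI)
  fix n
  have "cnj (coeff w n) = coeff w n"
    using arg_cong[OF assms, of "\<lambda>q. coeff q n"] by (simp add: coeff_map_poly)
  hence "Im (coeff w n) = 0" by (metis Reals_cnj_iff complex_is_Real_iff)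
  thus "coeff w n = coeff (map_poly complex_of_real (map_poly Re w)) n"
    by (simp add: coeff_map_poly complex_eq_iff)
qed

lemma wpoly:
  fixes Z :: "complex set" and mult :: "complex \<Rightarrow> nat"
  assumes fin: "finite Z"
    and U: "U = Z \<union> cnj ` Z"
    and e: "\<And>u. e u = max (if u \<in> Z then mult u else 0) (if cnj u \<in> Z then mult (cnj u) else 0)"
    and w: "w = (\<Prod>u\<in>U. [:-u, 1:] ^ e u)"
  shows "w \<noteq> 0" "degree w = (\<Sum>u\<in>U. e u)" "(\<Sum>z\<in>Z. mult z) \<le> degree w"
    "map_poly cnj w = w" "\<And>u. u \<in> U \<Longrightarrow> e u \<le> order u w" "\<And>x. poly w x = 0 \<Longrightarrow> x \<in> U"
    "\<And>u. e (cnj u) = e u" "finite U"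
proof -
  show finU: "finite U" using fin U by simp
  show w0: "w \<noteq> 0" unfolding w using finU by simp
  show dw: "degree w = (\<Sum>u\<in>U. e u)" unfolding w
    by (subst degree_prod_eq_sum_degree) (auto simp: degree_linear_power)
  have "(\<Sum>z\<in>Z. mult z) \<le> (\<Sum>z\<in>Z. e z)" by (intro sum_mono) (simp add: e)
  also have "\<dots> \<le> (\<Sum>u\<in>U. e u)" using finU U by (intro sum_mono2) auto
  finally show "(\<Sum>z\<in>Z. mult z) \<le> degree w" using dw by simp
  show ecnj: "\<And>u. e (cnj u) = e u" unfolding e by (simp add: max.commute)
  have cU: "cnj ` U = U"
  proof -
    have "cnj ` U \<subseteq> U" unfolding U by auto
    moreover have "U \<subseteq> cnj ` U" unfolding U image_Un image_image by auto
    ultimately show ?thesis by blast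
  qed
  show "map_poly cnj w = w"
  proof (subst poly_eq_poly_eq_iff[symmetric], rule ext)
    fix z
    have "poly (map_poly cnj w) z = cnj (\<Prod>u\<in>U. (cnj z - u) ^ e u)"
      unfolding w poly_map_poly_cnj poly_prod by (simp add: poly_power)
    also have "\<dots> = (\<Prod>u\<in>U. (z - cnj u) ^ e (cnj u))"
      by (simp add: ecnj)
    also have "\<dots> = (\<Prod>v\<in>cnj ` U. (z - v) ^ e v)"
      by (subst prod.reindex) (auto intro: inj_onI)
    also have "\<dots> = poly w z"
      unfolding cU w poly_prod by (simp add: poly_power)
    finally show "poly (map_poly cnj w) z = poly w z" .
  qed
  show "\<And>u. u \<in> U \<Longrightarrow> e u \<le> order u w"
  proof -
    fix u assume "u \<in> U"
    hence "[:-u, 1:] ^ e u dvd w" unfolding w using finU by (intro dvd_prodI)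
    thus "e u \<le> order u w" using w0 order_divides by blast
  qed
  show "\<And>x. poly w x = 0 \<Longrightarrow> x \<in> U"
  proof (rule ccontr)
    fix x assume "poly w x = 0" "x \<notin> U"
    moreover have "poly w x = (\<Prod>u\<in>U. (x - u) ^ e u)" unfolding w poly_prod by (simp add: poly_power)
    moreover have "(\<Prod>u\<in>U. (x - u) ^ e u) \<noteq> 0" using \<open>x \<notin> U\<close> finU by (auto simp: prod_zero_iff)
    ultimately show False by simp
  qed
qed

lemma CT_int:
  assumes gm: "good_meas M K" and fm: "f \<in> borel_measurable borel" and fc: "continuous_on K f"
    and z: "z \<notin> complex_of_real ` K"
  shows "integrable M (\<lambda>x. f x / (z - complex_of_real x))"
proof (rule gm_int_cont[OF gm])
  show "(\<lambda>x. f x / (z - complex_of_real x)) \<in> borel_measurable borel" using fm by measurable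
  have "\<forall>x\<in>K. z - complex_of_real x \<noteq> 0" using z by auto
  thus "continuous_on K (\<lambda>x. f x / (z - complex_of_real x))"
    using fc by (intro continuous_intros) auto
qed

lemma CT_sum:
  assumes gm: "good_meas M K" and fm: "\<And>i. i \<in> I \<Longrightarrow> f i \<in> borel_measurable borel"
    and fc: "\<And>i. i \<in> I \<Longrightarrow> continuous_on K (f i)"
    and z: "z \<notin> complex_of_real ` K"
  shows "(\<Sum>i\<in>I. CT M (f i) z) = CT M (\<lambda>x. \<Sum>i\<in>I. f i x) z"
proof -
  have "(\<integral>x. (\<Sum>i\<in>I. f i x / (z - complex_of_real x)) \<partial>M) = (\<Sum>i\<in>I. \<integral>x. f i x / (z - complex_of_real x) \<partial>M)"
    by (rule Bochner_Integration.integral_sum[where f="\<lambda>i x. f i x / (z - complex_of_real x)", OF CT_int[OF gm fm fc z]])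
  thus ?thesis unfolding CT_def sum_divide_distrib by simp
qed

lemma CT_cong:
  assumes gm: "good_meas M K" and "f1 \<in> borel_measurable borel" "f2 \<in> borel_measurable borel"
    and eq: "\<And>x. x \<in> K \<Longrightarrow> f1 x = f2 x"
  shows "CT M f1 z = CT M f2 z"
  unfolding CT_def
proof (rule integral_cong_AE)
  show "(\<lambda>x. f1 x / (z - complex_of_real x)) \<in> borel_measurable M"
    by (rule gm_meas[OF gm]) (use assms(2) in measurable)
  show "(\<lambda>x. f2 x / (z - complex_of_real x)) \<in> borel_measurable M"
    by (rule gm_meas[OF gm]) (use assms(3) in measurable)
  show "AE x in M. f1 x / (z - complex_of_real x) = f2 x / (z - complex_of_real x)"
    using gm_AE[OF gm] by (rule AE_mp) (auto simp: eq)
qed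

lemma ortho_zeros:
  fixes g :: "real \<Rightarrow> real"
  assumes gm: "good_meas M {a..b}" and ms: "msupp M \<subseteq> {a..b}" and inf: "infinite (msupp M)"
    and gc: "continuous_on {a..b} g" and gmeas: "g \<in> borel_measurable borel"
    and orth: "\<And>q. degree q < N \<Longrightarrow> (\<integral>x. g x * poly q x \<partial>M) = 0"
  shows "\<exists>F. finite F \<and> F \<subseteq> {a..b} \<and> N \<le> card F \<and> (\<forall>x\<in>F. g x = 0)"
proof -
  define Zg where "Zg = {x\<in>{a..b}. g x = 0}"
  show ?thesis
  proof (cases "finite Zg")
    case False
    then obtain F where "finite F" "card F = N" "F \<subseteq> Zg" using infinite_arbitrarily_large by blast
    thus ?thesis unfolding Zg_def by (intro exI[of _ F]) auto
  next
    case fin: True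
    show ?thesis
    proof (cases "N \<le> card Zg")
      case True show ?thesis by (rule exI[of _ Zg]) (use fin True in \<open>auto simp: Zg_def\<close>)
    next
      case False
      have "\<forall>x\<in>{a<..<b}. x \<notin> Zg \<longrightarrow> g x \<noteq> 0" unfolding Zg_def by auto
      from sign_poly[OF fin gc this] obtain q where q: "q \<noteq> 0" "degree q \<le> card Zg"
        "\<forall>x\<in>{a..b}. 0 \<le> poly q x * g x" by blast
      have "degree q < N" using q(2) False by simp
      hence "(\<integral>x. g x * poly q x \<partial>M) = 0" by (rule orth)
      hence i0: "(\<integral>x. poly q x * g x \<partial>M) = 0" by (simp add: mult.commute)
      have hc: "continuous_on {a..b} (\<lambda>x. poly q x * g x)" using gc by (intro continuous_intros)
      have hint: "integrable M (\<lambda>x. poly q x * g x)"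
        by (rule gm_int_cont[OF gm _ hc]) (use gmeas in measurable)
      have "AE x in M. 0 \<le> poly q x * g x" using gm_AE[OF gm] by (rule AE_mp) (use q(3) in auto)
      with i0 have ae0: "AE x in M. poly q x * g x = 0"
        using integral_nonneg_eq_0_iff_AE[OF hint] by blast
      have supp0: "poly q x0 * g x0 = 0" if x0: "x0 \<in> msupp M" for x0
      proof (rule ccontr)
        assume ne: "poly q x0 * g x0 \<noteq> 0"
        have x0K: "x0 \<in> {a..b}" using x0 ms by blast
        hence "0 \<le> poly q x0 * g x0" using q(3) by blast
        hence pos: "0 < poly q x0 * g x0" using ne by linarith
        obtain d where d: "d > 0" "\<forall>x'\<in>{a..b}. dist x' x0 < d \<longrightarrow> dist (poly q x' * g x') (poly q x0 * g x0) < poly q x0 * g x0"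
          using hc x0K pos unfolding continuous_on_iff by blast
        have "AE x in M. x \<notin> ball x0 d"
          using gm_AE[OF gm] ae0
        proof (eventually_elim)
          case (elim x)
          show "x \<notin> ball x0 d"
          proof
            assume "x \<in> ball x0 d"
            hence "dist x x0 < d" by (simp add: dist_commute)
            hence "dist (poly q x * g x) (poly q x0 * g x0) < poly q x0 * g x0" using d elim by blast
            thus False using elim by (simp add: dist_real_def)
          qed
        qed
        moreover have "ball x0 d \<in> sets M" using gm unfolding good_meas_def by simp
        moreover have "{x\<in>space M. \<not> x \<notin> ball x0 d} = ball x0 d" unfolding gm_space[OF gm] by blast
        ultimately have "emeasure M (ball x0 d) = 0" by (subst (asm) AE_iff_measurable) auto
        thus False using x0 d(1) unfolding msupp_def by blast
      qed
      have "msupp M \<subseteq> Zg \<union> {x. poly q x = 0}"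
      proof
        fix x assume x: "x \<in> msupp M"
        hence "poly q x * g x = 0" by (rule supp0)
        thus "x \<in> Zg \<union> {x. poly q x = 0}" using x ms unfolding Zg_def by auto
      qed
      moreover have "finite (Zg \<union> {x. poly q x = 0})" using fin poly_roots_finite[OF q(1)] by simp
      ultimately have "finite (msupp M)" by (rule finite_subset)
      thus ?thesis using inf by blast
    qed
  qed
qed

declare nik.simps[simp del]

lemma cpoly_holo: "cpoly q holomorphic_on A"
proof -
  have "(\<lambda>z. poly (map_poly complex_of_real q) z) holomorphic_on A"
    by (rule poly_holomorphic_on[of "\<lambda>z. z"]) (rule holomorphic_on_ident)
  thus ?thesis unfolding cpoly_fun by simp
qed

theorem lemma2:
  fixes m :: nat and \<mu> :: "nat \<Rightarrow> real measure" and c :: "nat \<Rightarrow> real"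
    and a b :: "nat \<Rightarrow> real" and n :: "nat \<Rightarrow> nat" and p :: "nat \<Rightarrow> real poly"
  assumes "m \<ge> 1"
    and "\<And>j. 1 \<le> j \<Longrightarrow> j \<le> m \<Longrightarrow> a j < b j"
    and "\<And>j. 1 \<le> j \<Longrightarrow> j < m \<Longrightarrow> {a j..b j} \<inter> {a (Suc j)..b (Suc j)} = {}"
    and "\<And>j. 1 \<le> j \<Longrightarrow> j \<le> m \<Longrightarrow> in_class_M (\<mu> j) (c j) {a j..b j}"
    and "\<And>k. k \<le> m \<Longrightarrow> p k = 0 \<or> degree (p k) < n k"
    and "\<And>k. 1 \<le> k \<Longrightarrow> k \<le> m \<Longrightarrow> int (n k) - 1 \<le> int (n 0)"
    and "at_least_zeros
           (\<lambda>z. cpoly (p 0) z + (\<Sum>k=1..m. cpoly (p k) z * nik \<mu> c 1 k z))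
           (UNIV - complex_of_real ` {a 1..b 1})
           (\<Sum>k\<le>m. n k)"
  shows "at_least_zeros
           (\<lambda>z. cpoly (p 1) z + (\<Sum>k=2..m. cpoly (p k) z * nik \<mu> c 2 k z))
           (UNIV - (if m \<ge> 2 then complex_of_real ` {a 2..b 2} else {}))
           ((\<Sum>k\<le>m. n k) - n 0)"
proof -
  note A2 = assms(2) and A3 = assms(3) and A4 = assms(4)
  define K where "K = {a 1..b 1}"
  define M where "M = \<mu> 1"
  define c1 where "c1 = c 1"
  define N where "N = (\<Sum>k\<le>m. n k) - n 0"
  define nn where "nn = (\<Sum>k\<le>m. n k)"
  have icM: "in_class_M M c1 K" unfolding M_def c1_def K_def using A4[of 1] assms(1) by simp
  note ic = in_class_good[OF icM[unfolded K_def]]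
  have gm: "good_meas M K" using ic(1) K_def by simp
  have c10: "c1 \<noteq> 0" using ic(4) by auto
  have nk_le: "n k \<le> nn" if "k \<le> m" for k unfolding nn_def using that by (intro member_le_sum) auto
  have n0_le: "n 0 \<le> nn" using nk_le by simp
  have degp: "degree (p k) \<le> n 0" if "1 \<le> k" "k \<le> m" for k
    using assms(5)[of k] assms(6)[OF that] that by auto
  have degp_nn: "degree (p k) \<le> nn" if "k \<le> m" for k
    using assms(5)[of k] nk_le[OF that] that by auto
  show ?thesis
  proof (cases "N = 0")
    case True
    show ?thesis unfolding at_least_zeros_def N_def[symmetric] True
      by (rule exI[of _ "{}"]) auto
  next
    case Npos: False
    hence nnpos: "nn > n 0" unfolding N_def nn_def by simp
    define hr where "hr k x = (if k = 1 then 1 else Re (nik \<mu> c 2 k (complex_of_real x)))" for k x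
    have hr_props: "hr k \<in> borel_measurable borel \<and> continuous_on K (hr k)
        \<and> (\<forall>z. nik \<mu> c 1 k z = of_real c1 * CT M (\<lambda>x. of_real (hr k x)) z)
        \<and> (2 \<le> k \<longrightarrow> (\<forall>x. nik \<mu> c 2 k (of_real x) = of_real (hr k x)))"
      if k: "1 \<le> k" "k \<le> m" for k
    proof (cases "k = 1")
      case True
      have h1: "hr k = (\<lambda>x. 1)" unfolding hr_def using True by simp
      have "nik \<mu> c 1 k z = of_real c1 * CT M (\<lambda>x. of_real (hr k x)) z" for z
        unfolding h1 using nik_eq[of \<mu> c 1 z] True unfolding M_def c1_def by simp
      moreover have "hr k \<in> borel_measurable borel" "continuous_on K (hr k)"
        unfolding h1 by (auto intro: continuous_intros)
      ultimately show ?thesis using True by auto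
    next
      case False
      hence k2: "2 \<le> k" using k by simp
      have km: "1 < m" using k2 k by simp
      note P = nik_props[of m a b \<mu> c k 2, OF A2 A3 A4 k(2) _ k2]
      have Pm: "(\<lambda>x. nik \<mu> c 2 k (of_real x)) \<in> borel_measurable borel" using P by simp
      have Pr: "\<And>x. Im (nik \<mu> c 2 k (of_real x)) = 0" using P by simp
      have Ph: "nik \<mu> c 2 k holomorphic_on - (complex_of_real ` {a 2..b 2})" using P by simp
      have hk: "hr k = (\<lambda>x. Re (nik \<mu> c 2 k (complex_of_real x)))" unfolding hr_def using False by auto
      have eq2: "\<And>x. nik \<mu> c 2 k (of_real x) = of_real (hr k x)"
        unfolding hk using Pr by (simp add: complex_eq_iff)
      have "complex_of_real ` K \<subseteq> - (complex_of_real ` {a 2..b 2})"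
        using A3[of 1] km unfolding K_def by (auto simp: disjoint_iff numeral_2_eq_2)
      hence "continuous_on (complex_of_real ` K) (nik \<mu> c 2 k)"
        using Ph holomorphic_on_imp_continuous_on holomorphic_on_subset by blast
      hence "continuous_on K (\<lambda>x. nik \<mu> c 2 k (of_real x))"
        by (rule continuous_on_compose2[where f=complex_of_real]) (auto intro: continuous_intros)
      hence hc: "continuous_on K (hr k)" unfolding hk by (intro continuous_intros)
      have hm: "hr k \<in> borel_measurable borel" unfolding hk using Pm by measurable
      have "nik \<mu> c 1 k z = of_real c1 * CT M (\<lambda>x. of_real (hr k x)) z" for z
      proof -
        have "nik \<mu> c 1 k z = of_real c1 * CT M (\<lambda>x. nik \<mu> c (Suc 1) k (of_real x)) z"
          using nik_lt[of 1 k \<mu> c z] False k unfolding M_def c1_def by simp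
        also have "(\<lambda>x. nik \<mu> c (Suc 1) k (of_real x)) = (\<lambda>x. of_real (hr k x))"
          using eq2 by (simp add: numeral_2_eq_2)
        finally show ?thesis .
      qed
      thus ?thesis using hc hm eq2 by blast
    qed
    have hr_meas: "\<And>k. 1 \<le> k \<Longrightarrow> k \<le> m \<Longrightarrow> hr k \<in> borel_measurable borel" using hr_props by blast
    have hr_cont: "\<And>k. 1 \<le> k \<Longrightarrow> k \<le> m \<Longrightarrow> continuous_on K (hr k)" using hr_props by blast
    have hr_nik1: "\<And>k z. 1 \<le> k \<Longrightarrow> k \<le> m \<Longrightarrow> nik \<mu> c 1 k z = of_real c1 * CT M (\<lambda>x. of_real (hr k x)) z"
      using hr_props by blast
    have hr_nik2: "\<And>k x. 2 \<le> k \<Longrightarrow> k \<le> m \<Longrightarrow> nik \<mu> c 2 k (of_real x) = of_real (hr k x)"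
      using hr_props by (metis one_le_numeral order_trans)
    define Rr where "Rr x = (\<Sum>k=1..m. poly (p k) x * hr k x)" for x
    have Rr_meas: "Rr \<in> borel_measurable borel"
      unfolding Rr_def[abs_def] using hr_meas by (intro borel_measurable_sum) (auto intro: borel_measurable_times)
    have Rr_cont: "continuous_on K Rr"
      unfolding Rr_def[abs_def] using hr_cont by (intro continuous_intros) auto
    have concl_fun: "cpoly (p 1) (of_real x) + (\<Sum>k=2..m. cpoly (p k) (of_real x) * nik \<mu> c 2 k (of_real x))
        = of_real (Rr x)" for x
    proof -
      have "Rr x = poly (p 1) x * hr 1 x + (\<Sum>k=Suc 1..m. poly (p k) x * hr k x)"
        unfolding Rr_def using assms(1) by (subst sum.atLeast_Suc_atMost) auto
      also have "\<dots> = poly (p 1) x + (\<Sum>k=2..m. poly (p k) x * hr k x)"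
        unfolding hr_def by (simp add: numeral_2_eq_2)
      finally have "of_real (Rr x) = cpoly (p 1) (of_real x) + (\<Sum>k=2..m. cpoly (p k) (of_real x) * of_real (hr k x))"
        by (simp add: cpoly_of_real)
      also have "\<dots> = cpoly (p 1) (of_real x) + (\<Sum>k=2..m. cpoly (p k) (of_real x) * nik \<mu> c 2 k (of_real x))"
        using hr_nik2 by simp
      finally show ?thesis by simp
    qed
    define L where "L z = cpoly (p 0) z + (\<Sum>k=1..m. cpoly (p k) z * nik \<mu> c 1 k z)" for z
    define S where "S = - (complex_of_real ` K)"
    have S_open: "open S"
    proof -
      have "compact (complex_of_real ` K)" unfolding K_def
        by (intro compact_continuous_image continuous_intros) auto
      thus ?thesis unfolding S_def by (intro open_Compl compact_imp_closed)
    qed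
    obtain Z mult where Z: "finite Z" "Z \<subseteq> UNIV - complex_of_real ` K" "nn \<le> (\<Sum>z\<in>Z. mult z)"
      "\<And>z l. z \<in> Z \<Longrightarrow> l < mult z \<Longrightarrow> (deriv ^^ l) L z = 0"
      using assms(7) unfolding at_least_zeros_def L_def[abs_def] K_def nn_def by blast
    have ZS: "Z \<subseteq> S" using Z(2) unfolding S_def by auto
    define U where "U = Z \<union> cnj ` Z"
    define e where "e u = max (if u \<in> Z then mult u else 0) (if cnj u \<in> Z then mult (cnj u) else 0)" for u
    define w where "w = (\<Prod>u\<in>U. [:-u, 1:] ^ e u)"
    note W = wpoly[OF Z(1) U_def e_def w_def]
    define wr where "wr = map_poly Re w"
    have w_wr: "w = map_poly complex_of_real wr" unfolding wr_def by (rule creal_real_poly[OF W(4)])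
    define Md where "Md = degree wr"
    have Md_w: "degree w = Md" unfolding Md_def w_wr by (simp add: degree_map_poly)
    have nn_Md: "nn \<le> Md" using Z(3) W(3) Md_w by simp
    have wr0: "wr \<noteq> 0" using W(1) w_wr by auto
    have wr_nz: "poly wr x \<noteq> 0" if "x \<in> K" for x
    proof
      assume "poly wr x = 0"
      hence "poly w (of_real x) = 0" unfolding w_wr by (simp add: cpoly_of_real[unfolded cpoly_def])
      hence "of_real x \<in> U" by (rule W(6))
      hence "of_real x \<in> Z" unfolding U_def
        by (auto, metis complex_cnj_cnj complex_cnj_complex_of_real)
      thus False using Z(2) that by auto
    qed
    have cpoly_wr: "cpoly wr = poly w" unfolding cpoly_fun w_wr ..
    define g where "g x = Rr x / poly wr x" for x
    have g_meas: "g \<in> borel_measurable borel" unfolding g_def[abs_def] using Rr_meas by measurable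
    have g_cont: "continuous_on K g" unfolding g_def[abs_def] using Rr_cont wr_nz
      by (intro continuous_intros) auto
    have gw: "g x * poly wr x = Rr x" if "x \<in> K" for x unfolding g_def using wr_nz[OF that] by simp
    define G where "G = CT M (\<lambda>x. of_real (g x))"
    have G_holo: "G holomorphic_on S"
    proof -
      obtain B where "\<forall>x\<in>K. norm (g x) \<le> B" using cont_bounded[OF g_cont gm_compact[OF gm]] by blast
      hence "\<forall>x\<in>K. norm (complex_of_real (g x)) \<le> B" by simp
      moreover have "(\<lambda>x. complex_of_real (g x)) \<in> borel_measurable borel" using g_meas by measurable
      ultimately show ?thesis unfolding G_def S_def using CT_holo[OF gm] by blast
    qed
    define Dr where "Dr = p 0 + smult c1 (\<Sum>k=1..m. DD M (p k) (hr k)) - smult c1 (DD M wr g)"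
    have key: "L z = of_real c1 * (cpoly wr z * G z) + cpoly Dr z" if z: "z \<in> S" for z
    proof -
      have zK: "z \<notin> complex_of_real ` K" using z unfolding S_def by simp
      have "L z = cpoly (p 0) z + (\<Sum>k=1..m. cpoly (p k) z * (of_real c1 * CT M (\<lambda>x. of_real (hr k x)) z))"
        unfolding L_def using hr_nik1 by simp
      also have "\<dots> = cpoly (p 0) z + of_real c1 * (\<Sum>k=1..m. cpoly (p k) z * CT M (\<lambda>x. of_real (hr k x)) z)"
        by (simp add: sum_distrib_left mult_ac)
      also have "(\<Sum>k=1..m. cpoly (p k) z * CT M (\<lambda>x. of_real (hr k x)) z)
          = (\<Sum>k=1..m. CT M (\<lambda>x. of_real (hr k x * poly (p k) x)) z + cpoly (DD M (p k) (hr k)) z)"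
        using CT_poly[OF gm hr_meas hr_cont zK] by (intro sum.cong refl) auto
      also have "\<dots> = (\<Sum>k=1..m. CT M (\<lambda>x. of_real (hr k x * poly (p k) x)) z) + cpoly (\<Sum>k=1..m. DD M (p k) (hr k)) z"
        by (simp add: sum.distrib cpoly_sum)
      also have "(\<Sum>k=1..m. CT M (\<lambda>x. of_real (hr k x * poly (p k) x)) z)
          = CT M (\<lambda>x. \<Sum>k=1..m. of_real (hr k x * poly (p k) x)) z"
      proof (rule CT_sum[OF gm _ _ zK])
        fix k assume "k \<in> {1..m}"
        hence "hr k \<in> borel_measurable borel" using hr_meas[of k] by auto
        thus "(\<lambda>x. complex_of_real (hr k x * poly (p k) x)) \<in> borel_measurable borel"
          by measurable
        show "continuous_on K (\<lambda>x. complex_of_real (hr k x * poly (p k) x))"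
          using hr_cont[of k] \<open>k \<in> {1..m}\<close> by (intro continuous_intros) auto
      qed
      also have "\<dots> = CT M (\<lambda>x. of_real (g x * poly wr x)) z"
      proof (rule CT_cong[OF gm])
        show "(\<lambda>x. \<Sum>k = 1..m. complex_of_real (hr k x * poly (p k) x)) \<in> borel_measurable borel"
          using hr_meas by (intro borel_measurable_sum) (auto intro!: borel_measurable_times)
        show "(\<lambda>x. complex_of_real (g x * poly wr x)) \<in> borel_measurable borel"
          using g_meas by measurable
        fix x assume "x \<in> K"
        thus "(\<Sum>k = 1..m. complex_of_real (hr k x * poly (p k) x)) = complex_of_real (g x * poly wr x)"
          using gw unfolding Rr_def by (simp add: mult.commute)
      qed
      also have "\<dots> = cpoly wr z * G z - cpoly (DD M wr g) z"
        unfolding G_def using CT_poly[OF gm g_meas g_cont zK, of wr] by simp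
      finally show ?thesis unfolding Dr_def cpoly_add cpoly_diff cpoly_smult
        by (simp add: algebra_simps)
    qed
    have L_holo: "L holomorphic_on S"
    proof -
      have "nik \<mu> c 1 k holomorphic_on S" if "k \<in> {1..m}" for k
        using nik_props[of m a b \<mu> c k 1, OF A2 A3 A4] that unfolding S_def K_def by auto
      hence "(\<lambda>z. \<Sum>k=1..m. cpoly (p k) z * nik \<mu> c 1 k z) holomorphic_on S"
        by (intro holomorphic_on_sum holomorphic_on_mult cpoly_holo) auto
      thus ?thesis unfolding L_def[abs_def] by (intro holomorphic_on_add cpoly_holo)
    qed
    have R_holo: "(\<lambda>z. of_real c1 * (cpoly wr z * G z) + cpoly Dr z) holomorphic_on S"
      using G_holo by (intro holomorphic_on_add holomorphic_on_mult holomorphic_on_const cpoly_holo)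
    define Dc where "Dc = map_poly complex_of_real Dr"
    have Dc_real: "map_poly cnj Dc = Dc" unfolding Dc_def
      by (subst map_poly_map_poly) (auto simp: o_def)
    have Dr_deg: "degree Dr < Md"
    proof -
      have "coeff Dr i = 0" if i: "i \<ge> Md" for i
      proof -
        have c0: "coeff (p 0) i = 0"
        proof (cases "p 0 = 0")
          case False
          hence "degree (p 0) < n 0" using assms(5)[of 0] by simp
          thus ?thesis using n0_le nn_Md i by (intro coeff_eq_0) simp
        qed simp
        have ck: "coeff (DD M (p k) (hr k)) i = 0" if "k \<in> {1..m}" for k
          using degp_nn[of k] that nn_Md i unfolding coeff_DD by auto
        have cw: "coeff (DD M wr g) i = 0" using i unfolding coeff_DD Md_def by auto
        show ?thesis unfolding Dr_def using c0 ck cw by (simp add: coeff_sum)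
      qed
      hence "degree Dr \<le> Md - 1" by (intro degree_le) auto
      moreover have "Md > 0" using nn_Md nnpos by simp
      ultimately show ?thesis by simp
    qed
    have Dr0: "Dr = 0"
    proof (rule ccontr)
      assume "Dr \<noteq> 0"
      hence Dc0: "Dc \<noteq> 0" unfolding Dc_def by (simp add: map_poly_eq_0_iff)
      have ordZ: "mult z \<le> order z Dc" if z: "z \<in> Z" for z
      proof (rule higher_pderiv_order[OF Dc0])
        fix l assume l: "l < mult z"
        have zS: "z \<in> S" using z ZS by blast
        have "(deriv ^^ l) L z = (deriv ^^ l) (\<lambda>z. of_real c1 * (cpoly wr z * G z) + cpoly Dr z) z"
          by (rule higher_deriv_transform_within_open[OF L_holo R_holo S_open zS key])
        also have "\<dots> = (deriv ^^ l) (\<lambda>z. of_real c1 * (cpoly wr z * G z)) z + (deriv ^^ l) (cpoly Dr) z"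
          by (rule higher_deriv_add[OF _ cpoly_holo S_open zS]) (use G_holo in \<open>intro holomorphic_on_add holomorphic_on_mult holomorphic_on_const cpoly_holo\<close>)
        also have "(deriv ^^ l) (\<lambda>z. of_real c1 * (cpoly wr z * G z)) z
            = of_real c1 * (deriv ^^ l) (\<lambda>z. cpoly wr z * G z) z"
          by (rule higher_deriv_cmult[OF _ zS S_open]) (use G_holo in \<open>intro holomorphic_on_add holomorphic_on_mult holomorphic_on_const cpoly_holo\<close>)
        also have "(deriv ^^ l) (\<lambda>z. cpoly wr z * G z) z
            = (\<Sum>i = 0..l. of_nat (l choose i) * (deriv ^^ i) (cpoly wr) z * (deriv ^^ (l - i)) G z)"
          by (rule higher_deriv_mult[OF _ G_holo S_open zS]) (rule cpoly_holo)
        also have "\<dots> = 0"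
        proof (rule sum.neutral, intro ballI)
          fix i assume "i \<in> {0..l}"
          hence "i < e z" using l unfolding e_def using z by auto
          moreover have "e z \<le> order z w" using W(5) z unfolding U_def by blast
          ultimately have "poly ((pderiv ^^ i) w) z = 0" by (intro order_higher_pderiv) auto
          thus "of_nat (l choose i) * (deriv ^^ i) (cpoly wr) z * (deriv ^^ (l - i)) G z = 0"
            unfolding cpoly_wr higher_deriv_poly by simp
        qed
        finally have "(deriv ^^ l) (cpoly Dr) z = (deriv ^^ l) L z" by simp
        also have "\<dots> = 0" using Z(4) z l by blast
        finally show "poly ((pderiv ^^ l) Dc) z = 0"
          unfolding cpoly_fun higher_deriv_poly Dc_def by simp
      qed
      have "e u \<le> order u Dc" if "u \<in> U" for u
      proof -
        have "(if u \<in> Z then mult u else 0) \<le> order u Dc" using ordZ by auto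
        moreover have "(if cnj u \<in> Z then mult (cnj u) else 0) \<le> order u Dc"
          using creal_order_cnj[OF Dc_real Dc0 ordZ[of "cnj u"]] by auto
        ultimately show ?thesis unfolding e_def by simp
      qed
      hence "(\<Sum>u\<in>U. e u) \<le> (\<Sum>u\<in>U. order u Dc)" by (intro sum_mono)
      also have "\<dots> \<le> degree Dc" by (rule sum_order_le_degree[OF W(8) Dc0])
      also have "\<dots> = degree Dr" unfolding Dc_def by (simp add: degree_map_poly)
      finally show False using Dr_deg W(2) Md_w by simp
    qed
    have int_g: "integrable M (\<lambda>x. g x * h x)" if "h \<in> borel_measurable borel" "continuous_on K h" for h
    proof (rule gm_int_cont[OF gm])
      show "(\<lambda>x. g x * h x) \<in> borel_measurable borel" using g_meas that(1) by measurable
      show "continuous_on K (\<lambda>x. g x * h x)" using g_cont that(2) by (intro continuous_intros)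
    qed
    have int_pow: "integrable M (\<lambda>x. g x * x ^ t)" for t
      by (rule int_g) (auto intro: continuous_intros)
    have ee_zero: "(\<integral>x. g x * ee wr i x \<partial>M) = 0" if i: "n 0 \<le> i" "i < Md" for i
    proof -
      have c0: "coeff (p 0) i = 0"
      proof (cases "p 0 = 0")
        case False
        hence "degree (p 0) < n 0" using assms(5)[of 0] by simp
        thus ?thesis using i by (intro coeff_eq_0) simp
      qed simp
      have ck: "coeff (DD M (p k) (hr k)) i = 0" if "k \<in> {1..m}" for k
        using degp[of k] that i unfolding coeff_DD by auto
      have cw: "coeff (DD M wr g) i = (\<integral>x. g x * ee wr i x \<partial>M)"
        using i unfolding coeff_DD Md_def by auto
      have "coeff Dr i = - c1 * (\<integral>x. g x * ee wr i x \<partial>M)"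
        unfolding Dr_def using c0 ck cw by (simp add: coeff_sum)
      thus ?thesis using Dr0 c10 by simp
    qed
    have lc: "coeff wr Md \<noteq> 0" unfolding Md_def using wr0 by simp
    have mom: "(\<integral>x. g x * x ^ t \<partial>M) = 0" if "t < Md - n 0" for t
      using that
    proof (induction t rule: less_induct)
      case (less t)
      define i where "i = Md - 1 - t"
      have i: "n 0 \<le> i" "i < Md" "Suc i \<le> Md" "Md - Suc i = t" using less.prems unfolding i_def by auto
      have split: "{Suc i..Md} = insert Md {Suc i..<Md}" using i by auto
      have "(\<integral>x. g x * ee wr i x \<partial>M) = (\<integral>x. (\<Sum>j\<in>{Suc i..Md}. coeff wr j * (g x * x ^ (j - Suc i))) \<partial>M)"
        unfolding ee_def Md_def by (simp add: sum_distrib_left mult_ac)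
      also have "\<dots> = (\<Sum>j\<in>{Suc i..Md}. (\<integral>x. coeff wr j * (g x * x ^ (j - Suc i)) \<partial>M))"
        by (rule Bochner_Integration.integral_sum) (use int_pow in auto)
      also have "\<dots> = (\<Sum>j\<in>{Suc i..Md}. coeff wr j * (\<integral>x. g x * x ^ (j - Suc i) \<partial>M))"
        by simp
      also have "\<dots> = coeff wr Md * (\<integral>x. g x * x ^ t \<partial>M)"
      proof -
        have "(\<Sum>j\<in>{Suc i..<Md}. coeff wr j * (\<integral>x. g x * x ^ (j - Suc i) \<partial>M)) = 0"
        proof (rule sum.neutral, intro ballI)
          fix j assume j: "j \<in> {Suc i..<Md}"
          have "j - Suc i < t" using j i by auto
          moreover have "j - Suc i < Md - n 0" using j i by auto
          ultimately have "(\<integral>x. g x * x ^ (j - Suc i) \<partial>M) = 0" using less.IH by blast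
          thus "coeff wr j * (\<integral>x. g x * x ^ (j - Suc i) \<partial>M) = 0" by simp
        qed
        thus ?thesis unfolding split using i by simp
      qed
      finally show ?case using ee_zero[OF i(1,2)] lc by simp
    qed
    have orth: "(\<integral>x. g x * poly q x \<partial>M) = 0" if q: "degree q < N" for q
    proof -
      have "(\<integral>x. g x * poly q x \<partial>M) = (\<integral>x. (\<Sum>t\<le>degree q. coeff q t * (g x * x ^ t)) \<partial>M)"
        unfolding poly_altdef by (simp add: sum_distrib_left mult_ac)
      also have "\<dots> = (\<Sum>t\<le>degree q. (\<integral>x. coeff q t * (g x * x ^ t) \<partial>M))"
        by (rule Bochner_Integration.integral_sum) (use int_pow in auto)
      also have "\<dots> = (\<Sum>t\<le>degree q. coeff q t * (\<integral>x. g x * x ^ t \<partial>M))"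
        by simp
      also have "\<dots> = 0"
      proof (rule sum.neutral, intro ballI)
        fix t assume "t \<in> {..degree q}"
        hence "t < Md - n 0" using q nn_Md unfolding N_def nn_def by auto
        thus "coeff q t * (\<integral>x. g x * x ^ t \<partial>M) = 0" using mom by simp
      qed
      finally show ?thesis .
    qed
    obtain F where F: "finite F" "F \<subseteq> K" "N \<le> card F" "\<forall>x\<in>F. g x = 0"
      using ortho_zeros[OF gm[unfolded K_def] ic(2) ic(3) g_cont[unfolded K_def] g_meas orth] K_def by blast
    have RF: "Rr x = 0" if "x \<in> F" for x
      using gw[of x] F that by auto
    show ?thesis unfolding at_least_zeros_def N_def[symmetric]
    proof (intro exI conjI)
      show "finite (complex_of_real ` F)" using F(1) by simp
      show "complex_of_real ` F \<subseteq> UNIV - (if 2 \<le> m then complex_of_real ` {a 2..b 2} else {})"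
      proof (cases "2 \<le> m")
        case True
        hence "{a 1..b 1} \<inter> {a 2..b 2} = {}" using A3[of 1] by (simp add: numeral_2_eq_2)
        thus ?thesis using True F(2) unfolding K_def by auto
      qed auto
      have "card (complex_of_real ` F) = card F" by (rule card_image) (simp add: inj_on_def)
      thus "N \<le> (\<Sum>z\<in>complex_of_real ` F. 1::nat)" using F(3) by simp
      show "\<forall>z\<in>complex_of_real ` F. \<forall>l<1::nat. (deriv ^^ l) (\<lambda>z. cpoly (p 1) z + (\<Sum>k = 2..m. cpoly (p k) z * nik \<mu> c 2 k z)) z = 0"
        using concl_fun RF by auto
    qed
  qed
qed

end
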